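(* Let $n\ge4$ and let $x$ be a point in the image $\Phi(K_{n-1})$. Then there exist a unique chain $D_0\subsetneq D_1\subsetneq\dots\subsetneq D_m$ of sets of pairwise noncrossing diagonals of $P_n$ and unique coefficients $a_0,\dots,a_m$ with all $a_i>0$ and $\sum_i a_i=1$ such that $x=\sum_{i=0}^m a_i\Phi(D_i)$.
   Context: $P_n$ is a regular $n$-gon whose edges are labeled cyclically by a fixed circular ordering; two diagonals cross if they meet in the interior; $\mathcal D$ is the set of diagonals. The associahedron $K_{n-1}$ is the $(n-3)$-dimensional convex polytope whose faces correspond bijectively to sets $D$ of pairwise noncrossing diagonals (face of $D$ contains face of $D'$ iff $D\subseteq D'$; vertices = triangulations, with $n-3$ diagonals). For a triangulation $T$, $\Phi(T)\in\mathbb R^{\mathcal D}$ has $d$-coordinate $1/(n-3)$ if $d\in T$ and $0$ otherwise; for a set $D$ of pairwise noncrossing diagonals, $\Phi(D)$ is the average of $\Phi(T)$ over triangulations $T\supseteq D$, and is the image of the barycenter $v_D$ of the face of $D$. $\Phi$ is extended to $K_{n-1}$ affinely on each simplex of its barycentric subdivision: for a chain $D_0\subsetneq\dots\subsetneq D_m$, $\Phi(\sum a_i v_{D_i})=\sum a_i\Phi(D_i)$ for $a_i\ge0$, $\sum a_i=1$. *)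

theory Defs
  imports Complex_Main
begin

text \<open>Vertices of P_n are 0,...,n-1 in cyclic order. A diagonal is a pair (i,j)
  with i < j < n joining two non-adjacent vertices.\<close>
definition diagonals :: "nat \<Rightarrow> (nat \<times> nat) set" where
  "diagonals n = {(i, j). i < j \<and> j < n \<and> i + 1 < j \<and> \<not> (i = 0 \<and> j = n - 1)}"

definition crosses :: "nat \<times> nat \<Rightarrow> nat \<times> nat \<Rightarrow> bool" where
  "crosses d e = (case d of (a, b) \<Rightarrow> case e of (c, d') \<Rightarrow>
      (a < c \<and> c < b \<and> b < d') \<or> (c < a \<and> a < d' \<and> d' < b))"

definition noncrossing :: "nat \<Rightarrow> (nat \<times> nat) set \<Rightarrow> bool" where
  "noncrossing n D = (D \<subseteq> diagonals n \<and> (\<forall>d\<in>D. \<forall>e\<in>D. \<not> crosses d e))"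

definition triangulation :: "nat \<Rightarrow> (nat \<times> nat) set \<Rightarrow> bool" where
  "triangulation n T = (noncrossing n T \<and> card T = n - 3)"

text \<open>Phi(T) in R^D, represented as a function on pairs (zero off the diagonals).\<close>
definition PhiT :: "nat \<Rightarrow> (nat \<times> nat) set \<Rightarrow> (nat \<times> nat) \<Rightarrow> real" where
  "PhiT n T = (\<lambda>d. if d \<in> T then 1 / real (n - 3) else 0)"

definition triangs_containing :: "nat \<Rightarrow> (nat \<times> nat) set \<Rightarrow> (nat \<times> nat) set set" where
  "triangs_containing n D = {T. triangulation n T \<and> D \<subseteq> T}"

definition PhiD :: "nat \<Rightarrow> (nat \<times> nat) set \<Rightarrow> (nat \<times> nat) \<Rightarrow> real" where
  "PhiD n D = (\<lambda>d. (\<Sum>T\<in>triangs_containing n D. PhiT n T d) / real (card (triangs_containing n D)))"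

definition nc_chain :: "nat \<Rightarrow> (nat \<times> nat) set list \<Rightarrow> bool" where
  "nc_chain n Ds = (Ds \<noteq> [] \<and> sorted_wrt (\<subset>) Ds \<and> (\<forall>D\<in>set Ds. noncrossing n D))"

definition comb :: "nat \<Rightarrow> (nat \<times> nat) set list \<Rightarrow> real list \<Rightarrow> (nat \<times> nat) \<Rightarrow> real" where
  "comb n Ds as = (\<lambda>d. \<Sum>i<length Ds. as ! i * PhiD n (Ds ! i) d)"

text \<open>Image of K_{n-1} under Phi: union over simplices of the barycentric subdivision
  (chains of faces) of the affine images.\<close>
definition Phi_image :: "nat \<Rightarrow> ((nat \<times> nat) \<Rightarrow> real) set" where
  "Phi_image n = {x. \<exists>Ds as. nc_chain n Ds \<and> length as = length Ds \<and>
      (\<forall>a\<in>set as. a \<ge> 0) \<and> sum_list as = 1 \<and> x = comb n Ds as}"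

end

theory Submission
  imports Defs
begin

definition diagV :: "nat set \<Rightarrow> (nat \<times> nat) set" where
  "diagV V = {(i,j). i \<in> V \<and> j \<in> V \<and> i < j \<and> (\<exists>v\<in>V. i < v \<and> v < j) \<and> (\<exists>v\<in>V. v < i \<or> j < v)}"

definition ncV :: "nat set \<Rightarrow> (nat \<times> nat) set \<Rightarrow> bool" where
  "ncV V D = (D \<subseteq> diagV V \<and> (\<forall>d\<in>D. \<forall>e\<in>D. \<not> crosses d e))"

lemma crosses_sym: "crosses d e = crosses e d"
  by (cases d; cases e) (auto simp: crosses_def)

lemma crosses_irrefl: "\<not> crosses d d"
  by (cases d) (auto simp: crosses_def)

lemma diagonals_eq: "diagonals n = diagV {0..<n}"
  unfolding diagonals_def diagV_def
  by auto

lemma finite_diagV: "finite V \<Longrightarrow> finite (diagV V)"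
  by (rule finite_subset[of _ "V \<times> V"]) (auto simp: diagV_def)

lemma split_props:
  assumes fin: "finite V" and dV: "(i,j) \<in> diagV V"
  defines "V1 \<equiv> {v\<in>V. i \<le> v \<and> v \<le> j}" and "V2 \<equiv> {v\<in>V. v \<le> i \<or> j \<le> v}"
  shows "card V1 < card V" "card V2 < card V" "3 \<le> card V1" "3 \<le> card V2"
   "card V1 + card V2 = card V + 2"
   "(i,j) \<notin> diagV V1" "(i,j) \<notin> diagV V2" "diagV V1 \<inter> diagV V2 = {}"
   "diagV V1 \<subseteq> diagV V" "diagV V2 \<subseteq> diagV V"
   "\<And>e. e \<in> diagV V \<Longrightarrow> e \<noteq> (i,j) \<Longrightarrow> \<not> crosses e (i,j) \<Longrightarrow> e \<in> diagV V1 \<union> diagV V2"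
   "\<And>e f. e \<in> diagV V1 \<Longrightarrow> f \<in> diagV V2 \<Longrightarrow> \<not> crosses e f"
   "\<And>e. e \<in> diagV V1 \<union> diagV V2 \<Longrightarrow> \<not> crosses e (i,j)"
proof -
  from dV obtain a b where ij: "i \<in> V" "j \<in> V" "i < j" and a: "a \<in> V" "i < a" "a < j"
    and b: "b \<in> V" "b < i \<or> j < b" by (auto simp: diagV_def)
  have s1: "V1 \<subseteq> V" "V2 \<subseteq> V" by (auto simp: V1_def V2_def)
  have f1: "finite V1" "finite V2" using s1 fin finite_subset by auto
  show "card V1 < card V" 
  proof (rule psubset_card_mono[OF fin])
    have "b \<notin> V1" using b by (auto simp: V1_def)
    then show "V1 \<subset> V" using s1 b by auto
  qed
  show "card V2 < card V" 
  proof (rule psubset_card_mono[OF fin])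
    have "a \<notin> V2" using a by (auto simp: V2_def)
    then show "V2 \<subset> V" using s1 a by auto
  qed
  have "{i,j,a} \<subseteq> V1" using ij a by (auto simp: V1_def)
  from card_mono[OF f1(1) this] show "3 \<le> card V1" using ij a by auto
  have "{i,j,b} \<subseteq> V2" using ij b by (auto simp: V2_def)
  from card_mono[OF f1(2) this] show "3 \<le> card V2" using ij b by auto
  have "V1 \<union> V2 = V" "V1 \<inter> V2 = {i,j}" using ij by (auto simp: V1_def V2_def)
  with card_Un_Int[OF f1] show "card V1 + card V2 = card V + 2" using ij by auto
  show "(i,j) \<notin> diagV V1" by (auto simp: diagV_def V1_def)
  show "(i,j) \<notin> diagV V2" by (auto simp: diagV_def V2_def)
  show "diagV V1 \<inter> diagV V2 = {}" by (auto simp: diagV_def V1_def V2_def)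
  show "diagV V1 \<subseteq> diagV V" by (auto simp: diagV_def V1_def)
  show "diagV V2 \<subseteq> diagV V" by (auto simp: diagV_def V2_def)
  show "e \<in> diagV V1 \<union> diagV V2" if "e \<in> diagV V" "e \<noteq> (i,j)" "\<not> crosses e (i,j)" for e
  proof (cases e)
    case (Pair p q)
    from that(1) obtain u w where pq: "p \<in> V" "q \<in> V" "p < q" and u: "u \<in> V" "p < u" "u < q"
      and w: "w \<in> V" "w < p \<or> q < w" unfolding Pair by (auto simp: diagV_def)
    have nc: "\<not> (i < p \<and> p < j \<and> j < q)" "\<not> (p < i \<and> i < q \<and> q < j)"
      using that(3) unfolding Pair by (auto simp: crosses_def)
    have ne: "p \<noteq> i \<or> q \<noteq> j" using that(2) Pair by auto
    show ?thesis
    proof (cases "i \<le> p \<and> q \<le> j")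
      case True
      have "(p,q) \<in> diagV V1"
        unfolding diagV_def V1_def using True pq u ij ne
        by simp (metis le_less le_trans less_imp_le)
      then show ?thesis using Pair by auto
    next
      case False
      have pV2: "p \<le> i \<or> j \<le> p" and qV2: "q \<le> i \<or> j \<le> q" using False nc pq by auto
      have btw: "\<exists>v\<in>V2. p < v \<and> v < q"
      proof (cases "p \<le> i \<and> j \<le> q")
        case True
        then show ?thesis using ne ij unfolding V2_def by force
      next
        case False
        then have "q \<le> i \<or> j \<le> p" using pV2 qV2 pq by auto
        then show ?thesis using u pq unfolding V2_def by force
      qed
      have outs: "\<exists>v\<in>V2. v < p \<or> q < v"
      proof (cases "p \<le> i \<and> j \<le> q")
        case True
        then show ?thesis using w unfolding V2_def by force
      next
        case False
        then have "q \<le> i \<or> j \<le> p" using pV2 qV2 pq by auto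
        then show ?thesis using ij pq unfolding V2_def by force
      qed
      have "(p,q) \<in> diagV V2" unfolding diagV_def using btw outs pq pV2 qV2
        by (auto simp: V2_def)
      then show ?thesis using Pair by auto
    qed
  qed
  show "\<not> crosses e f" if "e \<in> diagV V1" "f \<in> diagV V2" for e f
    using that by (cases e; cases f) (auto simp: diagV_def V1_def V2_def crosses_def)
  show "\<not> crosses e (i,j)" if "e \<in> diagV V1 \<union> diagV V2" for e
    using that by (cases e) (auto simp: diagV_def V1_def V2_def crosses_def)
qed

lemma diagV_nonempty:
  assumes "finite V" "4 \<le> card V"
  shows "\<exists>d. d \<in> diagV V"
proof -
  obtain xs where xs: "sorted_wrt (<) xs" "set xs = V" "length xs = card V"
    using assms(1) by (metis sorted_list_of_set.length_sorted_key_list_of_set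
        sorted_list_of_set.set_sorted_key_list_of_set sorted_list_of_set.strict_sorted_key_list_of_set)
  have l: "(0::nat) < 1" "(1::nat) < 2" "2 < (3::nat)" "3 < length xs" using xs assms by auto
  have "xs!0 < xs!1" "xs!1 < xs!2" "xs!2 < xs!3"
    using sorted_wrt_nth_less[OF xs(1)] l by auto
  moreover have "xs!0 \<in> V" "xs!1 \<in> V" "xs!2 \<in> V" "xs!3 \<in> V" using xs(2) l
    by (auto intro!: nth_mem)
  ultimately have "(xs!0, xs!2) \<in> diagV V" unfolding diagV_def by force
  then show ?thesis by blast
qed

lemma ncV_finite: "finite V \<Longrightarrow> ncV V D \<Longrightarrow> finite D"
  using finite_diagV finite_subset unfolding ncV_def by blast

lemma ext_bound:
  "finite V \<Longrightarrow> ncV V D \<Longrightarrow> card D \<le> card V - 3 \<and> (\<exists>T. ncV V T \<and> D \<subseteq> T \<and> card T = card V - 3)"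
proof (induction "card V" arbitrary: V D rule: less_induct)
  case less
  note fin = less.prems(1)
  have ne: "card D \<le> card V - 3 \<and> (\<exists>T. ncV V T \<and> D \<subseteq> T \<and> card T = card V - 3)"
    if D: "ncV V D" "D \<noteq> {}" for D
  proof -
    obtain i j where dD: "(i,j) \<in> D" using D(2) by auto
    then have dV: "(i,j) \<in> diagV V" using D(1) by (auto simp: ncV_def)
    define V1 where "V1 = {v\<in>V. i \<le> v \<and> v \<le> j}"
    define V2 where "V2 = {v\<in>V. v \<le> i \<or> j \<le> v}"
    note sp = split_props[OF fin dV, folded V1_def V2_def]
    have f12: "finite V1" "finite V2" by (auto simp: V1_def V2_def fin)
    define D1 where "D1 = D \<inter> diagV V1"
    define D2 where "D2 = D \<inter> diagV V2"
    have nc1: "ncV V1 D1" "ncV V2 D2" using D(1) by (auto simp: ncV_def D1_def D2_def)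
    have Deq: "D = insert (i,j) (D1 \<union> D2)"
    proof -
      have "e \<in> D1 \<union> D2" if "e \<in> D" "e \<noteq> (i,j)" for e
        using sp(11)[of e] that D(1) dD by (auto simp: ncV_def D1_def D2_def)
      then show ?thesis using dD by (auto simp: D1_def D2_def)
    qed
    from less.hyps[OF sp(1) f12(1) nc1(1)] obtain T1 where
      T1: "card D1 \<le> card V1 - 3" "ncV V1 T1" "D1 \<subseteq> T1" "card T1 = card V1 - 3" by blast
    from less.hyps[OF sp(2) f12(2) nc1(2)] obtain T2 where
      T2: "card D2 \<le> card V2 - 3" "ncV V2 T2" "D2 \<subseteq> T2" "card T2 = card V2 - 3" by blast
    have fD12: "finite (D1 \<union> D2)" using ncV_finite[OF fin D(1)] Deq by (metis finite_insert)
    have "card D \<le> Suc (card (D1 \<union> D2))"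
      unfolding Deq using fD12 by (simp add: card_insert_if)
    also have "\<dots> \<le> card D1 + card D2 + 1" using card_Un_le[of D1 D2] by simp
    finally have "card D \<le> card D1 + card D2 + 1" .
    then have bound: "card D \<le> card V - 3" using T1(1) T2(1) sp(3,4,5) by linarith
    define T where "T = insert (i,j) (T1 \<union> T2)"
    have sub1: "T1 \<subseteq> diagV V1" "T2 \<subseteq> diagV V2" using T1(2) T2(2) by (auto simp: ncV_def)
    have fT: "finite T1" "finite T2" using ncV_finite f12 T1(2) T2(2) by auto
    have ncT: "ncV V T"
      unfolding ncV_def
    proof (intro conjI ballI)
      show "T \<subseteq> diagV V" using sub1 sp(9,10) dV by (auto simp: T_def)
      fix d e assume de: "d \<in> T" "e \<in> T"
      have c: "\<not> crosses d e" if "d \<in> T1 \<or> d \<in> T2" "e \<in> T1 \<or> e \<in> T2" for d e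
      proof -
        have n1: "\<forall>d\<in>T1. \<forall>e\<in>T1. \<not> crosses d e" "\<forall>d\<in>T2. \<forall>e\<in>T2. \<not> crosses d e"
          using T1(2) T2(2) unfolding ncV_def by auto
        show ?thesis
        proof (cases "d \<in> T1")
          case True
          then show ?thesis
          proof (cases "e \<in> T1")
            case True then show ?thesis using n1 \<open>d \<in> T1\<close> by blast
          next
            case False then have "e \<in> T2" using that by blast
            then show ?thesis using sp(12) sub1 \<open>d \<in> T1\<close> by blast
          qed
        next
          case False then have "d \<in> T2" using that by blast
          then show ?thesis
          proof (cases "e \<in> T1")
            case True then show ?thesis using sp(12)[of e d] sub1 \<open>d \<in> T2\<close> crosses_sym by blast
          next
            case False then have "e \<in> T2" using that by blast
            then show ?thesis using n1 \<open>d \<in> T2\<close> by blast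
          qed
        qed
      qed
      show "\<not> crosses d e"
      proof (cases "d = (i,j)")
        case True
        then show ?thesis
        proof (cases "e = (i,j)")
          case True then show ?thesis using \<open>d = (i,j)\<close> crosses_irrefl by simp
        next
          case False then have "e \<in> T1 \<union> T2" using de(2) T_def by blast
          then have "e \<in> diagV V1 \<union> diagV V2" using sub1 by blast
          then show ?thesis using sp(13)[of e] \<open>d = (i,j)\<close> crosses_sym by metis
        qed
      next
        case False then have dd: "d \<in> T1 \<union> T2" using de(1) T_def by blast
        show ?thesis
        proof (cases "e = (i,j)")
          case True
          have "d \<in> diagV V1 \<union> diagV V2" using sub1 dd by blast
          then show ?thesis using sp(13)[of d] True by metis
        next
          case False then have "e \<in> T1 \<union> T2" using de(2) T_def by blast
          then show ?thesis using c dd by blast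
        qed
      qed
    qed
    have "(i,j) \<notin> T1 \<union> T2" using sub1 sp(6,7) by auto
    moreover have "T1 \<inter> T2 = {}" using sub1 sp(8) by auto
    ultimately have "card T = card T1 + card T2 + 1"
      unfolding T_def using fT by (simp add: card_Un_disjoint)
    then have "card T = card V - 3" using T1(4) T2(4) sp(3,4,5) by linarith
    moreover have "D \<subseteq> T" using T1(3) T2(3) Deq T_def by auto
    ultimately show ?thesis using bound ncT by blast
  qed
  show ?case
  proof (cases "D = {}")
    case False
    then show ?thesis using ne less.prems by blast
  next
    case True
    show ?thesis
    proof (cases "4 \<le> card V")
      case True
      then obtain d where "d \<in> diagV V" using diagV_nonempty fin by blast
      then have "ncV V {d}" by (auto simp: ncV_def crosses_irrefl)
      from ne[OF this] obtain T where "ncV V T" "card T = card V - 3" by blast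
      then show ?thesis using \<open>D = {}\<close> by (intro conjI exI[of _ T]) auto
    next
      case False
      then have "card V - 3 = 0" by auto
      then show ?thesis using \<open>D = {}\<close> by (intro conjI exI[of _ "{}"]) (auto simp: ncV_def)
    qed
  qed
qed

lemma combine:
  assumes fin: "finite V" and dV: "(i,j) \<in> diagV V"
    and T1: "ncV {v\<in>V. i \<le> v \<and> v \<le> j} T1" "card T1 = card {v\<in>V. i \<le> v \<and> v \<le> j} - 3"
    and T2: "ncV {v\<in>V. v \<le> i \<or> j \<le> v} T2" "card T2 = card {v\<in>V. v \<le> i \<or> j \<le> v} - 3"
  shows "ncV V (insert (i,j) (T1 \<union> T2)) \<and> card (insert (i,j) (T1 \<union> T2)) = card V - 3"
proof -
    define V1 where "V1 = {v\<in>V. i \<le> v \<and> v \<le> j}"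
    define V2 where "V2 = {v\<in>V. v \<le> i \<or> j \<le> v}"
    note sp = split_props[OF fin dV, folded V1_def V2_def]
    have f12: "finite V1" "finite V2" by (auto simp: V1_def V2_def fin)
    note T1 = T1[folded V1_def] and T2 = T2[folded V2_def]
    define T where "T = insert (i,j) (T1 \<union> T2)"
    have sub1: "T1 \<subseteq> diagV V1" "T2 \<subseteq> diagV V2" using T1(1) T2(1) by (auto simp: ncV_def)
    have fT: "finite T1" "finite T2" using ncV_finite f12 T1(1) T2(1) by auto
    have ncT: "ncV V T"
      unfolding ncV_def
    proof (intro conjI ballI)
      show "T \<subseteq> diagV V" using sub1 sp(9,10) dV by (auto simp: T_def)
      fix d e assume de: "d \<in> T" "e \<in> T"
      have c: "\<not> crosses d e" if "d \<in> T1 \<or> d \<in> T2" "e \<in> T1 \<or> e \<in> T2" for d e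
      proof -
        have n1: "\<forall>d\<in>T1. \<forall>e\<in>T1. \<not> crosses d e" "\<forall>d\<in>T2. \<forall>e\<in>T2. \<not> crosses d e"
          using T1(1) T2(1) unfolding ncV_def by auto
        show ?thesis
        proof (cases "d \<in> T1")
          case True
          then show ?thesis
          proof (cases "e \<in> T1")
            case True then show ?thesis using n1 \<open>d \<in> T1\<close> by blast
          next
            case False then have "e \<in> T2" using that by blast
            then show ?thesis using sp(12) sub1 \<open>d \<in> T1\<close> by blast
          qed
        next
          case False then have "d \<in> T2" using that by blast
          then show ?thesis
          proof (cases "e \<in> T1")
            case True then show ?thesis using sp(12)[of e d] sub1 \<open>d \<in> T2\<close> crosses_sym by blast
          next
            case False then have "e \<in> T2" using that by blast
            then show ?thesis using n1 \<open>d \<in> T2\<close> by blast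
          qed
        qed
      qed
      show "\<not> crosses d e"
      proof (cases "d = (i,j)")
        case True
        then show ?thesis
        proof (cases "e = (i,j)")
          case True then show ?thesis using \<open>d = (i,j)\<close> crosses_irrefl by simp
        next
          case False then have "e \<in> T1 \<union> T2" using de(2) T_def by blast
          then have "e \<in> diagV V1 \<union> diagV V2" using sub1 by blast
          then show ?thesis using sp(13)[of e] \<open>d = (i,j)\<close> crosses_sym by metis
        qed
      next
        case False then have dd: "d \<in> T1 \<union> T2" using de(1) T_def by blast
        show ?thesis
        proof (cases "e = (i,j)")
          case True
          have "d \<in> diagV V1 \<union> diagV V2" using sub1 dd by blast
          then show ?thesis using sp(13)[of d] True by metis
        next
          case False then have "e \<in> T1 \<union> T2" using de(2) T_def by blast
          then show ?thesis using c dd by blast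
        qed
      qed
    qed
    have "(i,j) \<notin> T1 \<union> T2" using sub1 sp(6,7) by auto
    moreover have "T1 \<inter> T2 = {}" using sub1 sp(8) by auto
    ultimately have "card T = card T1 + card T2 + 1"
      unfolding T_def using fT by (simp add: card_Un_disjoint)
    then have "card T = card V - 3" using T1(2) T2(2) sp(3,4,5) by linarith
    then show ?thesis using ncT T_def by simp
qed

lemma avoid:
  "finite V \<Longrightarrow> ncV V D \<Longrightarrow> d \<in> diagV V \<Longrightarrow> d \<notin> D \<Longrightarrow> \<forall>e\<in>D. \<not> crosses d e \<Longrightarrow>
   \<exists>T. ncV V T \<and> D \<subseteq> T \<and> d \<notin> T \<and> card T = card V - 3"
proof (induction "card V" arbitrary: V D d rule: less_induct)
  case less
  note fin = less.prems(1)
  show ?case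
  proof (cases "D = {}")
    case True
    obtain i j where dij: "d = (i,j)" by (cases d)
    from less.prems(3) obtain a b where ij: "i \<in> V" "j \<in> V" "i < j" and a: "a \<in> V" "i < a" "a < j"
      and b: "b \<in> V" "b < i \<or> j < b" unfolding dij by (auto simp: diagV_def)
    obtain e where e: "e \<in> diagV V" "crosses e d"
    proof (cases "b < i")
      case True
      have "(b,a) \<in> diagV V" unfolding diagV_def using True ij a b by force
      moreover have "crosses (b,a) d" using True a unfolding dij crosses_def by auto
      ultimately show ?thesis using that by blast
    next
      case False
      then have bj: "j < b" using b by auto
      have "(a,b) \<in> diagV V" unfolding diagV_def using bj ij a b by force
      moreover have "crosses (a,b) d" using bj a unfolding dij crosses_def by auto
      ultimately show ?thesis using that by blast
    qed
    have "ncV V {e}" using e by (auto simp: ncV_def crosses_irrefl)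
    from ext_bound[OF fin this] obtain T where T: "ncV V T" "e \<in> T" "card T = card V - 3" by blast
    have "d \<notin> T" using T(1,2) e(2) unfolding ncV_def by (metis crosses_sym)
    then show ?thesis using T True by blast
  next
    case False
    obtain i j where dD: "(i,j) \<in> D" using False by auto
    then have dV: "(i,j) \<in> diagV V" using less.prems(2) by (auto simp: ncV_def)
    define V1 where "V1 = {v\<in>V. i \<le> v \<and> v \<le> j}"
    define V2 where "V2 = {v\<in>V. v \<le> i \<or> j \<le> v}"
    note sp = split_props[OF fin dV, folded V1_def V2_def]
    have f12: "finite V1" "finite V2" by (auto simp: V1_def V2_def fin)
    define D1 where "D1 = D \<inter> diagV V1"
    define D2 where "D2 = D \<inter> diagV V2"
    have nc1: "ncV V1 D1" "ncV V2 D2" using less.prems(2) by (auto simp: ncV_def D1_def D2_def)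
    have Deq: "D = insert (i,j) (D1 \<union> D2)"
    proof -
      have "e \<in> D1 \<union> D2" if "e \<in> D" "e \<noteq> (i,j)" for e
        using sp(11)[of e] that less.prems(2) dD by (auto simp: ncV_def D1_def D2_def)
      then show ?thesis using dD by (auto simp: D1_def D2_def)
    qed
    have dne: "d \<noteq> (i,j)" using less.prems(4) dD by auto
    have "\<not> crosses d (i,j)" using less.prems(5) dD by blast
    then have d12: "d \<in> diagV V1 \<union> diagV V2" using sp(11) less.prems(3) dne by blast
    have dnD: "d \<notin> D1" "d \<notin> D2" "\<forall>e\<in>D1. \<not> crosses d e" "\<forall>e\<in>D2. \<not> crosses d e"
      using less.prems(4,5) by (auto simp: D1_def D2_def)
    obtain T1 T2 where T1: "ncV V1 T1" "D1 \<subseteq> T1" "card T1 = card V1 - 3" "d \<notin> T1"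
      and T2: "ncV V2 T2" "D2 \<subseteq> T2" "card T2 = card V2 - 3" "d \<notin> T2"
    proof (cases "d \<in> diagV V1")
      case True
      from less.hyps[OF sp(1) f12(1) nc1(1) True dnD(1) dnD(3)] obtain T1 where
        T1: "ncV V1 T1" "D1 \<subseteq> T1" "d \<notin> T1" "card T1 = card V1 - 3" by blast
      from ext_bound[OF f12(2) nc1(2)] obtain T2 where
        T2: "ncV V2 T2" "D2 \<subseteq> T2" "card T2 = card V2 - 3" by blast
      have "d \<notin> T2" using T2(1) True sp(8) unfolding ncV_def by blast
      then show ?thesis using that T1 T2 by blast
    next
      case False
      then have True: "d \<in> diagV V2" using d12 by blast
      from less.hyps[OF sp(2) f12(2) nc1(2) True dnD(2) dnD(4)] obtain T2 where
        T2: "ncV V2 T2" "D2 \<subseteq> T2" "d \<notin> T2" "card T2 = card V2 - 3" by blast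
      from ext_bound[OF f12(1) nc1(1)] obtain T1 where
        T1: "ncV V1 T1" "D1 \<subseteq> T1" "card T1 = card V1 - 3" by blast
      have "d \<notin> T1" using T1(1) True sp(8) unfolding ncV_def by blast
      then show ?thesis using that T1 T2 by blast
    qed
    have c: "ncV V (insert (i,j) (T1 \<union> T2)) \<and> card (insert (i,j) (T1 \<union> T2)) = card V - 3"
      using combine[OF fin dV] T1 T2 unfolding V1_def V2_def by blast
    have "D \<subseteq> insert (i,j) (T1 \<union> T2)" using Deq T1(2) T2(2) by blast
    moreover have "d \<notin> insert (i,j) (T1 \<union> T2)" using dne T1(4) T2(4) by blast
    ultimately show ?thesis using c by blast
  qed
qed


lemma noncrossing_eq: "noncrossing n D = ncV {0..<n} D"
  unfolding noncrossing_def ncV_def diagonals_eq by simp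

lemma tri_ext: "noncrossing n D \<Longrightarrow> \<exists>T. triangulation n T \<and> D \<subseteq> T"
  using ext_bound[of "{0..<n}" D] unfolding noncrossing_eq triangulation_def by auto

lemma nc_bound: "noncrossing n D \<Longrightarrow> card D \<le> n - 3"
  using ext_bound[of "{0..<n}" D] unfolding noncrossing_eq by auto

lemma tri_avoid: "noncrossing n D \<Longrightarrow> d \<in> diagonals n \<Longrightarrow> d \<notin> D \<Longrightarrow> \<forall>e\<in>D. \<not> crosses d e \<Longrightarrow>
  \<exists>T. triangulation n T \<and> D \<subseteq> T \<and> d \<notin> T"
  using avoid[of "{0..<n}" D d] unfolding noncrossing_eq triangulation_def diagonals_eq by auto

lemma finite_TC: "finite (triangs_containing n D)"
proof -
  have "triangs_containing n D \<subseteq> Pow (diagonals n)"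
    by (auto simp: triangs_containing_def triangulation_def noncrossing_def)
  moreover have "finite (diagonals n)" unfolding diagonals_eq by (simp add: finite_diagV)
  ultimately show ?thesis by (meson finite_Pow_iff finite_subset)
qed

lemma PhiD_eq: "PhiD n D d = (1 / real (n - 3)) * real (card {T \<in> triangs_containing n D. d \<in> T})
    / real (card (triangs_containing n D))"
proof -
  have "(\<Sum>T\<in>triangs_containing n D. PhiT n T d) = (\<Sum>T\<in>{T \<in> triangs_containing n D. d \<in> T}. 1 / real (n - 3))"
  proof -
    have "(\<Sum>T\<in>triangs_containing n D. PhiT n T d) = (\<Sum>T\<in>triangs_containing n D. if d \<in> T then 1 / real (n - 3) else 0)"
      unfolding PhiT_def by simp
    also have "\<dots> = (\<Sum>T\<in>{T \<in> triangs_containing n D. d \<in> T}. 1 / real (n - 3))"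
      by (rule sum.inter_filter[OF finite_TC, symmetric])
    finally show ?thesis .
  qed
  then show ?thesis unfolding PhiD_def by simp
qed

lemma phi_props:
  assumes n: "n \<ge> 4" and D: "noncrossing n D"
  shows "d \<in> D \<Longrightarrow> PhiD n D d = 1 / real (n - 3)"
    and "\<not> (d \<in> diagonals n \<and> (\<forall>e\<in>D. \<not> crosses d e)) \<Longrightarrow> PhiD n D d = 0"
    and "d \<in> diagonals n \<Longrightarrow> \<forall>e\<in>D. \<not> crosses d e \<Longrightarrow> d \<notin> D \<Longrightarrow> 0 < PhiD n D d \<and> PhiD n D d < 1 / real (n - 3)"
    and "0 \<le> PhiD n D d"
proof -
  define A where "A = triangs_containing n D"
  define B where "B = {T \<in> A. d \<in> T}"
  have fA: "finite A" using finite_TC A_def by simp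
  have BA: "B \<subseteq> A" using B_def by auto
  have fB: "finite B" using fA BA finite_subset by blast
  have Ane: "A \<noteq> {}" using tri_ext[OF D] unfolding A_def triangs_containing_def by auto
  then have cA: "card A > 0" using fA by (simp add: card_gt_0_iff)
  have c: "1 / real (n - 3) > 0" using n by simp
  have P: "PhiD n D d = (1 / real (n - 3)) * real (card B) / real (card A)"
    using PhiD_eq A_def B_def by simp
  show "d \<in> D \<Longrightarrow> PhiD n D d = 1 / real (n - 3)"
  proof -
    assume "d \<in> D"
    then have "B = A" unfolding B_def A_def triangs_containing_def by auto
    then show ?thesis using P cA by simp
  qed
  show "\<not> (d \<in> diagonals n \<and> (\<forall>e\<in>D. \<not> crosses d e)) \<Longrightarrow> PhiD n D d = 0"
  proof -
    assume h: "\<not> (d \<in> diagonals n \<and> (\<forall>e\<in>D. \<not> crosses d e))"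
    have "B = {}"
    proof (rule ccontr)
      assume "B \<noteq> {}"
      then obtain T where "T \<in> A" "d \<in> T" using B_def by auto
      then show False using h unfolding A_def triangs_containing_def triangulation_def noncrossing_def
        by blast
    qed
    then show ?thesis using P by simp
  qed
  show "0 \<le> PhiD n D d" using P by simp
  show "d \<in> diagonals n \<Longrightarrow> \<forall>e\<in>D. \<not> crosses d e \<Longrightarrow> d \<notin> D \<Longrightarrow> 0 < PhiD n D d \<and> PhiD n D d < 1 / real (n - 3)"
  proof -
    assume h: "d \<in> diagonals n" "\<forall>e\<in>D. \<not> crosses d e" "d \<notin> D"
    have "noncrossing n (insert d D)" using D h crosses_sym crosses_irrefl
      unfolding noncrossing_def by auto
    from tri_ext[OF this] obtain T where "triangulation n T" "insert d D \<subseteq> T" by blast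
    then have "T \<in> B" unfolding B_def A_def triangs_containing_def by auto
    then have Bp: "card B > 0" using fB by (auto simp: card_gt_0_iff)
    from tri_avoid[OF D h(1) h(3) h(2)] obtain T' where "triangulation n T'" "D \<subseteq> T'" "d \<notin> T'" by blast
    then have "T' \<in> A - B" unfolding B_def A_def triangs_containing_def by auto
    then have "B \<subset> A" using BA by auto
    then have "card B < card A" using fA by (simp add: psubset_card_mono)
    then have "real (card B) / real (card A) < 1" using cA by simp
    moreover have "real (card B) / real (card A) > 0" using cA Bp by simp
    moreover have "PhiD n D d = (1 / real (n - 3)) * (real (card B) / real (card A))" using P by simp
    ultimately show ?thesis using c
      by (metis mult_less_cancel_left_pos mult.right_neutral mult_pos_pos)
  qed
qed


definition combP :: "nat \<Rightarrow> ((nat \<times> nat) set \<times> real) list \<Rightarrow> (nat \<times> nat) \<Rightarrow> real" where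
  "combP n ps = (\<lambda>d. sum_list (map (\<lambda>p. snd p * PhiD n (fst p) d) ps))"

definition chainP :: "nat \<Rightarrow> ((nat \<times> nat) set \<times> real) list \<Rightarrow> bool" where
  "chainP n ps = (ps \<noteq> [] \<and> sorted_wrt (\<subset>) (map fst ps) \<and> (\<forall>p\<in>set ps. noncrossing n (fst p) \<and> snd p > 0))"

lemma combP_Cons: "combP n ((D,a)#ps) d = a * PhiD n D d + combP n ps d"
  by (simp add: combP_def)

lemma combP_nonneg: "n \<ge> 4 \<Longrightarrow> \<forall>p\<in>set ps. noncrossing n (fst p) \<and> snd p > 0 \<Longrightarrow> 0 \<le> combP n ps d"
  unfolding combP_def by (rule sum_list_nonneg) (auto intro!: mult_nonneg_nonneg phi_props(4))

lemma sum_pos: "ps \<noteq> [] \<Longrightarrow> \<forall>p\<in>set ps. snd p > (0::real) \<Longrightarrow> sum_list (map snd ps) > 0"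
  by (induction ps) (auto, metis add_pos_nonneg less_eq_real_def sum_list_nonneg list.set_map image_iff neq_Nil_conv)

lemma K1:
  assumes n: "n \<ge> 4" and ch: "chainP n ((D0,a0)#ps)"
  shows "combP n ((D0,a0)#ps) d = sum_list (map snd ((D0,a0)#ps)) * (1 / real (n - 3)) \<longleftrightarrow> d \<in> D0"
proof -
  let ?c = "1 / real (n - 3)"
  have sub: "\<forall>p\<in>set ps. D0 \<subset> fst p" using ch by (auto simp: chainP_def)
  have nc: "\<forall>p\<in>set ((D0,a0)#ps). noncrossing n (fst p) \<and> snd p > 0" using ch by (auto simp: chainP_def)
  have le: "snd p * PhiD n (fst p) d \<le> snd p * ?c" if "p \<in> set ((D0,a0)#ps)" for p
  proof -
    have "PhiD n (fst p) d \<le> ?c"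
      using phi_props(1,2,3)[OF n, of "fst p" d] nc that by (cases "d \<in> fst p") force+
    moreover have "snd p > 0" using nc that by blast
    ultimately show ?thesis by (metis less_imp_le mult_left_mono)
  qed
  have eqs: "sum_list (map (\<lambda>p. snd p * ?c) qs) = sum_list (map snd qs) * ?c" for qs :: "((nat \<times> nat) set \<times> real) list"
    by (induction qs) (auto simp: add_divide_distrib)
  show ?thesis
  proof
    assume "d \<in> D0"
    then have "snd p * PhiD n (fst p) d = snd p * ?c" if "p \<in> set ((D0,a0)#ps)" for p
      using phi_props(1)[OF n] nc that sub by (metis in_mono less_imp_le set_ConsD fst_conv)
    then have "combP n ((D0,a0)#ps) d = sum_list (map (\<lambda>p. snd p * ?c) ((D0,a0)#ps))"
      unfolding combP_def by (metis (mono_tags, lifting) map_eq_conv)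
    then show "combP n ((D0,a0)#ps) d = sum_list (map snd ((D0,a0)#ps)) * ?c" using eqs by metis
  next
    assume h: "combP n ((D0,a0)#ps) d = sum_list (map snd ((D0,a0)#ps)) * ?c"
    show "d \<in> D0"
    proof (rule ccontr)
      assume "d \<notin> D0"
      have nc0: "noncrossing n D0" "a0 > 0" using nc by auto
      have "PhiD n D0 d < ?c"
        using phi_props(2,3)[OF n nc0(1), of d] \<open>d \<notin> D0\<close> n by (cases "d \<in> diagonals n \<and> (\<forall>e\<in>D0. \<not> crosses d e)") auto
      then have "a0 * PhiD n D0 d < a0 * ?c" using nc0 by (metis mult_strict_left_mono)
      moreover have "combP n ps d \<le> sum_list (map (\<lambda>p. snd p * ?c) ps)"
        unfolding combP_def by (rule sum_list_mono) (use le in auto)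
      ultimately have "combP n ((D0,a0)#ps) d < a0 * ?c + sum_list (map snd ps) * ?c"
        using eqs[of ps] combP_Cons by simp
      then show False using h by (simp add: add_divide_distrib)
    qed
  qed
qed

lemma K3:
  assumes n: "n \<ge> 4" and ch: "chainP n ((D0,a0)#ps)" and ne: "ps \<noteq> []"
  shows "\<exists>d. PhiD n D0 d > 0 \<and> combP n ps d = 0"
proof -
  obtain D1 a1 ps' where ps: "ps = (D1,a1)#ps'" using ne by (metis list.exhaust surj_pair)
  have D01: "D0 \<subset> D1" using ch ps by (auto simp: chainP_def)
  have D1p: "\<forall>p\<in>set ps. D1 \<subseteq> fst p" using ch ps by (auto simp: chainP_def)
  have nc0: "noncrossing n D0" and nc1: "noncrossing n D1" using ch ps by (auto simp: chainP_def)
  obtain e where e: "e \<in> D1" "e \<notin> D0" using D01 by auto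
  have ediag: "e \<in> diagonals n" using nc1 e unfolding noncrossing_def by auto
  have ecomp: "\<forall>f\<in>D0. \<not> crosses e f" using nc1 e D01 unfolding noncrossing_def by auto
  from tri_avoid[OF nc0 ediag e(2) ecomp] obtain T where T: "triangulation n T" "D0 \<subseteq> T" "e \<notin> T" by blast
  have fT: "finite T" using T(1) unfolding triangulation_def noncrossing_eq using ncV_finite by blast
  have "\<not> noncrossing n (insert e T)"
  proof
    assume "noncrossing n (insert e T)"
    then have "card (insert e T) \<le> n - 3" by (rule nc_bound)
    then show False using T fT unfolding triangulation_def by simp
  qed
  then obtain d where d: "d \<in> T" "crosses d e"
    using T(1) ediag crosses_sym crosses_irrefl unfolding triangulation_def noncrossing_def by blast
  have ddiag: "d \<in> diagonals n" using T(1) d unfolding triangulation_def noncrossing_def by auto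
  have dcomp: "\<forall>f\<in>D0. \<not> crosses d f" using T d unfolding triangulation_def noncrossing_def by auto
  have dnD0: "d \<notin> D0" using d(2) ecomp crosses_sym by blast
  have pos: "PhiD n D0 d > 0" using phi_props(3)[OF n nc0 ddiag dcomp dnD0] by simp
  have "\<forall>p\<in>set ps. PhiD n (fst p) d = 0"
  proof
    fix p assume p: "p \<in> set ps"
    have "noncrossing n (fst p)" using ch p by (auto simp: chainP_def)
    moreover have "e \<in> fst p" using D1p p e by auto
    ultimately show "PhiD n (fst p) d = 0" using phi_props(2)[OF n] d(2) by blast
  qed
  then have "combP n ps d = 0" unfolding combP_def by (induction ps) auto
  then show ?thesis using pos by blast
qed

lemma chainP_tl: "chainP n ((D0,a0)#ps) \<Longrightarrow> ps \<noteq> [] \<Longrightarrow> chainP n ps"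
  by (auto simp: chainP_def)

lemma H:
  assumes n: "n \<ge> 4" and ch1: "chainP n ((D0,a0)#ps)" and ch2: "chainP n ((D0,b0)#qs)"
    and s: "sum_list (map snd ((D0,a0)#ps)) = sum_list (map snd ((D0,b0)#qs))"
    and x: "combP n ((D0,a0)#ps) = combP n ((D0,b0)#qs)"
  shows "\<not> a0 < b0"
proof
  assume lt: "a0 < b0"
  have pos2: "\<forall>p\<in>set qs. noncrossing n (fst p) \<and> snd p > 0" using ch2 by (auto simp: chainP_def)
  have "sum_list (map snd qs) \<ge> 0" by (rule sum_list_nonneg) (use pos2 in force)
  then have "ps \<noteq> []" using s lt by auto
  from K3[OF n ch1 this] obtain d where d: "PhiD n D0 d > 0" "combP n ps d = 0" by blast
  have "combP n ((D0,a0)#ps) d = a0 * PhiD n D0 d" using d combP_Cons by simp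
  also have "\<dots> < b0 * PhiD n D0 d" using lt d by simp
  also have "\<dots> \<le> combP n ((D0,b0)#qs) d" using combP_nonneg[OF n pos2] combP_Cons by simp
  finally show False using x by simp
qed

lemma uniq:
  "n \<ge> 4 \<Longrightarrow> chainP n ps \<Longrightarrow> chainP n qs \<Longrightarrow> sum_list (map snd ps) = sum_list (map snd qs) \<Longrightarrow>
   combP n ps = combP n qs \<Longrightarrow> ps = qs"
proof (induction ps arbitrary: qs)
  case Nil
  then show ?case by (simp add: chainP_def)
next
  case (Cons p ps)
  obtain D0 a0 where p: "p = (D0,a0)" by (cases p)
  obtain E0 b0 qs' where q: "qs = (E0,b0)#qs'" using Cons.prems(3) unfolding chainP_def
    by (metis list.exhaust surj_pair)
  note n = Cons.prems(1)
  have ch1: "chainP n ((D0,a0)#ps)" and ch2: "chainP n ((E0,b0)#qs')" using Cons.prems p q by auto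
  have s: "sum_list (map snd ((D0,a0)#ps)) = sum_list (map snd ((E0,b0)#qs'))" using Cons.prems p q by simp
  have x: "combP n ((D0,a0)#ps) = combP n ((E0,b0)#qs')" using Cons.prems p q by simp
  have "d \<in> D0 \<longleftrightarrow> d \<in> E0" for d
    using K1[OF n ch1, of d] K1[OF n ch2, of d] s x by simp
  then have DE: "E0 = D0" by auto
  note ch2 = ch2[unfolded DE] and s = s[unfolded DE] and x = x[unfolded DE]
  have ab: "a0 = b0" using H[OF n ch1 ch2 s x] H[OF n ch2 ch1 s[symmetric] x[symmetric]] by linarith
  have pos1: "\<forall>p\<in>set ps. snd p > 0" and pos2: "\<forall>p\<in>set qs'. snd p > 0"
    using ch1 ch2 by (auto simp: chainP_def)
  have s': "sum_list (map snd ps) = sum_list (map snd qs')" using s ab by simp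
  show ?case
  proof (cases "ps = []")
    case True
    then have "qs' = []" using s' sum_pos[OF _ pos2] by force
    then show ?thesis using True p q DE ab by simp
  next
    case False
    then have "qs' \<noteq> []" using s' sum_pos[OF _ pos1] by force
    have x': "combP n ps = combP n qs'"
    proof
      fix d show "combP n ps d = combP n qs' d"
        using fun_cong[OF x, of d] ab combP_Cons by simp
    qed
    have "ps = qs'" using Cons.IH[OF n chainP_tl[OF ch1 False] chainP_tl[OF ch2 \<open>qs' \<noteq> []\<close>] s' x'] .
    then show ?thesis using p q DE ab by simp
  qed
qed


lemma comb_zip: "length as = length Ds \<Longrightarrow> comb n Ds as = combP n (zip Ds as)"
proof
  fix d assume l: "length as = length Ds"
  have "combP n (zip Ds as) d = (\<Sum>i = 0..<length (zip Ds as). (map (\<lambda>p. snd p * PhiD n (fst p) d) (zip Ds as)) ! i)"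
    unfolding combP_def by (subst sum_list_sum_nth) simp
  also have "\<dots> = (\<Sum>i<length Ds. as ! i * PhiD n (Ds ! i) d)"
    using l by (intro sum.cong) auto
  finally show "comb n Ds as d = combP n (zip Ds as) d" unfolding comb_def by simp
qed

theorem lemma15:
  fixes n :: nat and x :: "(nat \<times> nat) \<Rightarrow> real"
  assumes "n \<ge> 4" and "x \<in> Phi_image n"
  shows "\<exists>!(Ds, as). nc_chain n Ds \<and> length as = length Ds \<and>
           (\<forall>a\<in>set as. a > 0) \<and> sum_list as = 1 \<and> x = comb n Ds as"
proof -
  note n = assms(1)
  define P where "P = (\<lambda>(Ds, as). nc_chain n Ds \<and> length as = length Ds \<and>
           (\<forall>a\<in>set as. a > 0) \<and> sum_list as = (1::real) \<and> x = comb n Ds as)"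
  have toP: "chainP n (zip Ds as) \<and> sum_list (map snd (zip Ds as)) = 1 \<and> x = combP n (zip Ds as)"
    if "P (Ds, as)" for Ds as
  proof -
    from that have h: "nc_chain n Ds" "length as = length Ds" "\<forall>a\<in>set as. a > 0" "sum_list as = 1"
      "x = comb n Ds as" unfolding P_def by auto
    have "map fst (zip Ds as) = Ds" "map snd (zip Ds as) = as" using h(2) by auto
    moreover have "zip Ds as \<noteq> []" using h(1,2) unfolding nc_chain_def by (cases Ds; cases as) auto
    moreover have "\<forall>p\<in>set (zip Ds as). noncrossing n (fst p) \<and> snd p > 0"
      using h(1,3) unfolding nc_chain_def by (auto dest: set_zip_leftD set_zip_rightD)
    ultimately show ?thesis using h comb_zip[OF h(2)] unfolding chainP_def nc_chain_def by auto
  qed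
  obtain Ds as where ex: "nc_chain n Ds" "length as = length Ds" "\<forall>a\<in>set as. a \<ge> 0"
    "sum_list as = 1" "x = comb n Ds as" using assms(2) unfolding Phi_image_def by blast
  define ps where "ps = filter (\<lambda>p. snd p > 0) (zip Ds as)"
  have mz: "map fst (zip Ds as) = Ds" "map snd (zip Ds as) = as" using ex(2) by auto
  have z0: "\<forall>p\<in>set (zip Ds as). \<not> snd p > 0 \<longrightarrow> snd p = 0"
  proof (intro ballI impI)
    fix p assume "p \<in> set (zip Ds as)" "\<not> snd p > 0"
    moreover have "snd p \<in> set as" using set_zip_rightD[of "fst p" "snd p"] calculation(1) by simp
    ultimately show "snd p = 0" using ex(3) by force
  qed
  have sps: "sum_list (map snd ps) = 1"
    unfolding ps_def using sum_list_map_filter[of "zip Ds as" "\<lambda>p. snd p > 0" snd] z0 mz ex(4) by simp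
  have cps: "combP n ps = combP n (zip Ds as)"
  proof
    fix d show "combP n ps d = combP n (zip Ds as) d"
      unfolding ps_def combP_def
      by (rule sum_list_map_filter) (use z0 in auto)
  qed
  have Pw: "P (map fst ps, map snd ps)"
  proof -
    have "ps \<noteq> []" using sps by auto
    moreover have "sorted_wrt (\<subset>) (map fst ps)"
    proof -
      have "sorted_wrt (\<subset>) (map fst (zip Ds as))" using ex(1) mz unfolding nc_chain_def by simp
      then have "sorted_wrt (\<lambda>p q. fst p \<subset> fst q) (zip Ds as)" by (simp add: sorted_wrt_map)
      then have "sorted_wrt (\<lambda>p q. fst p \<subset> fst q) ps" unfolding ps_def by (rule sorted_wrt_filter)
      then show ?thesis by (simp add: sorted_wrt_map)
    qed
    moreover have "\<forall>D\<in>set (map fst ps). noncrossing n D"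
      using ex(1) unfolding ps_def nc_chain_def by (auto dest: set_zip_leftD)
    moreover have "\<forall>a\<in>set (map snd ps). a > 0" unfolding ps_def by auto
    moreover have "x = comb n (map fst ps) (map snd ps)"
      using comb_zip[of "map snd ps" "map fst ps" n] cps ex(5) comb_zip[OF ex(2)]
      by (simp add: zip_map_fst_snd)
    ultimately show ?thesis unfolding P_def nc_chain_def using sps by simp
  qed
  have uq: "y = z" if "P y" "P z" for y z
  proof -
    obtain Ds1 as1 where y: "y = (Ds1, as1)" by (cases y)
    obtain Ds2 as2 where z: "z = (Ds2, as2)" by (cases z)
    have l: "length as1 = length Ds1" "length as2 = length Ds2" using that y z unfolding P_def by auto
    have "zip Ds1 as1 = zip Ds2 as2"
      using uniq[OF n] toP[of Ds1 as1] toP[of Ds2 as2] that y z by auto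
    then have "map fst (zip Ds1 as1) = map fst (zip Ds2 as2)" "map snd (zip Ds1 as1) = map snd (zip Ds2 as2)"
      by auto
    then show ?thesis using l y z by simp
  qed
  have "\<exists>!p. P p" using Pw uq by blast
  then show ?thesis unfolding P_def by simp
qed

end
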